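(* Fix a merge tree $(T,f)$. The maps $\mathcal L$ and $\mathcal T$ are well defined and mutually inverse, hence give a bijection between the set of ordered merge trees $(T,f,(\le_h))$ and the set of leaf-ordered merge trees $(T,f,\sqsubseteq_L)$; that is, $\mathcal T(\mathcal L((T,f,(\le_h))))=(T,f,(\le_h))$ for every layer-order $(\le_h)$ and $\mathcal L(\mathcal T((T,f,\sqsubseteq_L)))=(T,f,\sqsubseteq_L)$ for every leaf-order $\sqsubseteq_L$.
   Context: A merge tree $(T,f)$: a finite rooted tree $T$ identified with its topological realisation, with a continuous $f\colon T\to\mathbb{R}\cup\{\infty\}$ strictly increasing towards the root, $f(v)=\infty$ iff $v$ is the root; the lowest leaf has height $0$; $L(T)$ is the set of leaves. $x_1\preceq x_2$ iff there is an $f$-increasing path from $x_1$ to $x_2$; $T_x$ is the subtree of descendants of $x$; $\mathrm{lca}$ is the lowest common ancestor; $\mathrm{anc}_h(x)$ is the unique ancestor of $x$ at height $h\ge f(x)$; $\mathbb{L}_h=\{x:f(x)=h\}$. A layer-order is a family $(\le_h)_{h\ge0}$ of total orders on the $\mathbb{L}_h$ that is consistent: for $h_1\le h_2$ and $x_1,x_2\in\mathbb{L}_{h_1}$, $x_1\le_{h_1}x_2$ implies $\mathrm{anc}_{h_2}(x_1)\le_{h_2}\mathrm{anc}_{h_2}(x_2)$; $(T,f,(\le_h))$ is an ordered merge tree. A leaf-order is a total order $\sqsubseteq_L$ on $L(T)$ that separates subtrees: for leaves $u,u_1,u_2$ with $u_1\sqsubseteq_L u\sqsubseteq_L u_2$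 we have $u\in T_{\mathrm{lca}(u_1,u_2)}$; $(T,f,\sqsubseteq_L)$ is a leaf-ordered merge tree. $\mathcal L((T,f,(\le_h)))=(T,f,\sqsubseteq_L)$ where, for leaves $u_1,u_2$ and $h=\max(f(u_1),f(u_2))$, $u_1\sqsubseteq_L u_2$ iff $\mathrm{anc}_h(u_1)\le_h\mathrm{anc}_h(u_2)$. $\mathcal T((T,f,\sqsubseteq_L))=(T,f,(\le_h))$ where, for $x_1,x_2\in\mathbb{L}_h$, $x_1\le_h x_2$ iff $x_1=x_2$ or $u_1\sqsubseteq_L u_2$ for all leaves $u_1\in T_{x_1}$, $u_2\in T_{x_2}$. *)

theory Defs
  imports "HOL-Library.Extended_Real"
begin

(* The topological realisation is modelled by points (v, h): the point at height h
   on the edge from v (non-root) to par v, with fv v \<le> h < fv (par v); the point (v, fv v)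
   is the vertex v itself. The root is the single point (r, \<infinity>).
   The height function f is the second component. *)

definition tree_edges :: "'v set \<Rightarrow> 'v \<Rightarrow> ('v \<Rightarrow> 'v) \<Rightarrow> ('v \<times> 'v) set" where
  "tree_edges V r par = {(v, par v) | v. v \<in> V - {r}}"

definition leaf_vertices :: "'v set \<Rightarrow> 'v \<Rightarrow> ('v \<Rightarrow> 'v) \<Rightarrow> 'v set" where
  "leaf_vertices V r par = {v \<in> V - {r}. \<not> (\<exists>c \<in> V - {r}. par c = v)}"

definition merge_tree :: "'v set \<Rightarrow> 'v \<Rightarrow> ('v \<Rightarrow> 'v) \<Rightarrow> ('v \<Rightarrow> ereal) \<Rightarrow> bool" where
  "merge_tree V r par fv \<longleftrightarrow>
     finite V \<and> r \<in> V \<and>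
     (\<forall>v \<in> V - {r}. par v \<in> V \<and> fv v < fv (par v)) \<and>
     (\<forall>v \<in> V. (v, r) \<in> (tree_edges V r par)\<^sup>*) \<and>
     (\<forall>v \<in> V. fv v = \<infinity> \<longleftrightarrow> v = r) \<and>
     (\<forall>v \<in> V. fv v \<noteq> -\<infinity>) \<and>
     (\<exists>u \<in> leaf_vertices V r par. fv u = 0) \<and>
     (\<forall>u \<in> leaf_vertices V r par. 0 \<le> fv u)"

definition mt_points :: "'v set \<Rightarrow> 'v \<Rightarrow> ('v \<Rightarrow> 'v) \<Rightarrow> ('v \<Rightarrow> ereal) \<Rightarrow> ('v \<times> ereal) set" where
  "mt_points V r par fv =
     {(r, \<infinity>)} \<union> {(v, h). v \<in> V - {r} \<and> fv v \<le> h \<and> h < fv (par v)}"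

definition mt_le :: "'v set \<Rightarrow> 'v \<Rightarrow> ('v \<Rightarrow> 'v) \<Rightarrow> ('v \<times> ereal) \<Rightarrow> ('v \<times> ereal) \<Rightarrow> bool" where
  "mt_le V r par x y \<longleftrightarrow> snd x \<le> snd y \<and> (fst x, fst y) \<in> (tree_edges V r par)\<^sup>*"

definition mt_leaves :: "'v set \<Rightarrow> 'v \<Rightarrow> ('v \<Rightarrow> 'v) \<Rightarrow> ('v \<Rightarrow> ereal) \<Rightarrow> ('v \<times> ereal) set" where
  "mt_leaves V r par fv = {(v, fv v) | v. v \<in> leaf_vertices V r par}"

definition mt_level :: "'v set \<Rightarrow> 'v \<Rightarrow> ('v \<Rightarrow> 'v) \<Rightarrow> ('v \<Rightarrow> ereal) \<Rightarrow> ereal \<Rightarrow> ('v \<times> ereal) set" where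
  "mt_level V r par fv h = {x \<in> mt_points V r par fv. snd x = h}"

definition mt_subtree :: "'v set \<Rightarrow> 'v \<Rightarrow> ('v \<Rightarrow> 'v) \<Rightarrow> ('v \<Rightarrow> ereal) \<Rightarrow> ('v \<times> ereal) \<Rightarrow> ('v \<times> ereal) set" where
  "mt_subtree V r par fv x = {y \<in> mt_points V r par fv. mt_le V r par y x}"

definition mt_anc :: "'v set \<Rightarrow> 'v \<Rightarrow> ('v \<Rightarrow> 'v) \<Rightarrow> ('v \<Rightarrow> ereal) \<Rightarrow> ereal \<Rightarrow> ('v \<times> ereal) \<Rightarrow> ('v \<times> ereal)" where
  "mt_anc V r par fv h x = (THE y. y \<in> mt_points V r par fv \<and> mt_le V r par x y \<and> snd y = h)"

definition mt_lca :: "'v set \<Rightarrow> 'v \<Rightarrow> ('v \<Rightarrow> 'v) \<Rightarrow> ('v \<Rightarrow> ereal) \<Rightarrow> ('v \<times> ereal) \<Rightarrow> ('v \<times> ereal) \<Rightarrow> ('v \<times> ereal)" where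
  "mt_lca V r par fv x y = (THE z. z \<in> mt_points V r par fv \<and> mt_le V r par x z \<and> mt_le V r par y z \<and>
        (\<forall>w \<in> mt_points V r par fv. mt_le V r par x w \<and> mt_le V r par y w \<longrightarrow> mt_le V r par z w))"

definition layer_order :: "'v set \<Rightarrow> 'v \<Rightarrow> ('v \<Rightarrow> 'v) \<Rightarrow> ('v \<Rightarrow> ereal) \<Rightarrow> (real \<Rightarrow> (('v \<times> ereal) \<times> ('v \<times> ereal)) set) \<Rightarrow> bool" where
  "layer_order V r par fv ord \<longleftrightarrow>
     (\<forall>h::real. 0 \<le> h \<longrightarrow> linear_order_on (mt_level V r par fv (ereal h)) (ord h)) \<and>
     (\<forall>h1 h2::real. 0 \<le> h1 \<and> h1 \<le> h2 \<longrightarrow>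
        (\<forall>x1 \<in> mt_level V r par fv (ereal h1). \<forall>x2 \<in> mt_level V r par fv (ereal h1).
           (x1, x2) \<in> ord h1 \<longrightarrow>
           (mt_anc V r par fv (ereal h2) x1, mt_anc V r par fv (ereal h2) x2) \<in> ord h2))"

definition leaf_order :: "'v set \<Rightarrow> 'v \<Rightarrow> ('v \<Rightarrow> 'v) \<Rightarrow> ('v \<Rightarrow> ereal) \<Rightarrow> (('v \<times> ereal) \<times> ('v \<times> ereal)) set \<Rightarrow> bool" where
  "leaf_order V r par fv lo \<longleftrightarrow>
     linear_order_on (mt_leaves V r par fv) lo \<and>
     (\<forall>u \<in> mt_leaves V r par fv. \<forall>u1 \<in> mt_leaves V r par fv. \<forall>u2 \<in> mt_leaves V r par fv.
        (u1, u) \<in> lo \<and> (u, u2) \<in> lo \<longrightarrow> u \<in> mt_subtree V r par fv (mt_lca V r par fv u1 u2))"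

definition layer_to_leaf :: "'v set \<Rightarrow> 'v \<Rightarrow> ('v \<Rightarrow> 'v) \<Rightarrow> ('v \<Rightarrow> ereal) \<Rightarrow> (real \<Rightarrow> (('v \<times> ereal) \<times> ('v \<times> ereal)) set) \<Rightarrow> (('v \<times> ereal) \<times> ('v \<times> ereal)) set" where
  "layer_to_leaf V r par fv ord =
     {(u1, u2). u1 \<in> mt_leaves V r par fv \<and> u2 \<in> mt_leaves V r par fv \<and>
        (let h = max (snd u1) (snd u2) in
          (mt_anc V r par fv h u1, mt_anc V r par fv h u2) \<in> ord (real_of_ereal h))}"

definition leaf_to_layer :: "'v set \<Rightarrow> 'v \<Rightarrow> ('v \<Rightarrow> 'v) \<Rightarrow> ('v \<Rightarrow> ereal) \<Rightarrow> (('v \<times> ereal) \<times> ('v \<times> ereal)) set \<Rightarrow> real \<Rightarrow> (('v \<times> ereal) \<times> ('v \<times> ereal)) set" where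
  "leaf_to_layer V r par fv lo h =
     {(x1, x2). x1 \<in> mt_level V r par fv (ereal h) \<and> x2 \<in> mt_level V r par fv (ereal h) \<and>
        (x1 = x2 \<or>
         (\<forall>u1 \<in> mt_leaves V r par fv \<inter> mt_subtree V r par fv x1.
            \<forall>u2 \<in> mt_leaves V r par fv \<inter> mt_subtree V r par fv x2. (u1, u2) \<in> lo))}"

end

theory Submission
  imports Defs
begin


locale MT =
  fixes V :: "'v set" and r :: 'v and par :: "'v \<Rightarrow> 'v" and fv :: "'v \<Rightarrow> ereal"
  assumes mt: "merge_tree V r par fv"
begin

abbreviation "E \<equiv> tree_edges V r par"
abbreviation "P \<equiv> mt_points V r par fv"
abbreviation "lee \<equiv> mt_le V r par"
abbreviation "anc \<equiv> mt_anc V r par fv"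
abbreviation "LV \<equiv> leaf_vertices V r par"
abbreviation "LP \<equiv> mt_leaves V r par fv"
abbreviation "lvl \<equiv> mt_level V r par fv"
abbreviation "sub \<equiv> mt_subtree V r par fv"
abbreviation "lca \<equiv> mt_lca V r par fv"

lemma finV: "finite V" and rV: "r \<in> V"
  and par_in: "v \<in> V \<Longrightarrow> v \<noteq> r \<Longrightarrow> par v \<in> V"
  and fv_less: "v \<in> V \<Longrightarrow> v \<noteq> r \<Longrightarrow> fv v < fv (par v)"
  and to_root: "v \<in> V \<Longrightarrow> (v, r) \<in> E\<^sup>*"
  and fv_inf: "v \<in> V \<Longrightarrow> fv v = \<infinity> \<longleftrightarrow> v = r"
  and fv_ninf: "v \<in> V \<Longrightarrow> fv v \<noteq> -\<infinity>"
  and leaf0: "\<exists>u \<in> LV. fv u = 0"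
  and leaf_nn: "u \<in> LV \<Longrightarrow> 0 \<le> fv u"
  using mt unfolding merge_tree_def by auto

lemma E_iff: "(a,b) \<in> E \<longleftrightarrow> a \<in> V \<and> a \<noteq> r \<and> b = par a"
  by (auto simp: tree_edges_def)

lemma rt_V: "(a,b) \<in> E\<^sup>* \<Longrightarrow> a \<in> V \<Longrightarrow> b \<in> V"
  by (induction rule: rtrancl_induct) (auto simp: E_iff par_in)

lemma rt_step: "(a,b) \<in> E\<^sup>* \<Longrightarrow> a \<noteq> b \<Longrightarrow> a \<in> V \<and> a \<noteq> r \<and> (par a, b) \<in> E\<^sup>*"
  by (erule converse_rtranclE) (auto simp: E_iff)

lemma rt_fv: "(a,b) \<in> E\<^sup>* \<Longrightarrow> a \<in> V \<Longrightarrow> fv a \<le> fv b"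
proof (induction rule: rtrancl_induct)
  case (step y z)
  then have "y \<in> V" "y \<noteq> r" "z = par y" using E_iff by auto
  then show ?case using step fv_less[of y] by auto
qed simp

lemma rt_fv_strict: "(a,b) \<in> E\<^sup>* \<Longrightarrow> a \<noteq> b \<Longrightarrow> fv a < fv b"
proof -
  assume h: "(a,b) \<in> E\<^sup>*" "a \<noteq> b"
  from rt_step[OF h] have "a \<in> V" "a \<noteq> r" "(par a, b) \<in> E\<^sup>*" by auto
  then show ?thesis using fv_less[of a] rt_fv[of "par a" b] par_in[of a] by fastforce
qed

lemma rt_root: "(r,b) \<in> E\<^sup>* \<Longrightarrow> b = r"
  by (erule converse_rtranclE) (auto simp: E_iff)

lemma rt_antisym: "(a,b) \<in> E\<^sup>* \<Longrightarrow> (b,a) \<in> E\<^sup>* \<Longrightarrow> a = b"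
  by (metis rt_fv_strict order_less_asym)

lemma rt_chain: "(v,b) \<in> E\<^sup>* \<Longrightarrow> (v,a) \<in> E\<^sup>* \<Longrightarrow> (a,b) \<in> E\<^sup>* \<or> (b,a) \<in> E\<^sup>*"
proof (induction rule: rtrancl_induct)
  case base
  then show ?case by auto
next
  case (step y z)
  then have yz: "(y,z) \<in> E" by simp
  from step.IH[OF step.prems] show ?case
  proof
    assume "(a,y) \<in> E\<^sup>*" then show ?thesis using yz by (meson rtrancl_into_rtrancl)
  next
    assume ya: "(y,a) \<in> E\<^sup>*"
    show ?thesis
    proof (cases "y = a")
      case True then show ?thesis using yz by (simp add: r_into_rtrancl)
    next
      case False
      from ya show ?thesis
      proof (rule converse_rtranclE)
        assume "y = a" then show ?thesis using False by simp
      next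
        fix c assume c: "(y,c) \<in> E" "(c,a) \<in> E\<^sup>*"
        have "c = z" using c(1) yz unfolding E_iff by simp
        then show ?thesis using c(2) by simp
      qed
    qed
  qed
qed

lemma P_iff: "x \<in> P \<longleftrightarrow> x = (r,\<infinity>) \<or> (fst x \<in> V \<and> fst x \<noteq> r \<and> fv (fst x) \<le> snd x \<and> snd x < fv (par (fst x)))"
  by (cases x) (auto simp: mt_points_def)

lemma P_cases: "x \<in> P \<Longrightarrow> (x = (r,\<infinity>) \<Longrightarrow> Q) \<Longrightarrow> (fst x \<in> V \<Longrightarrow> fst x \<noteq> r \<Longrightarrow> fv (fst x) \<le> snd x \<Longrightarrow> snd x < fv (par (fst x)) \<Longrightarrow> Q) \<Longrightarrow> Q"
  unfolding P_iff by blast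

lemma P_intro: "v \<in> V \<Longrightarrow> v \<noteq> r \<Longrightarrow> fv v \<le> h \<Longrightarrow> h < fv (par v) \<Longrightarrow> (v,h) \<in> P"
  by (simp add: mt_points_def)

lemma P_V: "x \<in> P \<Longrightarrow> fst x \<in> V"
  by (erule P_cases) (simp_all add: rV)

lemma P_fv: "x \<in> P \<Longrightarrow> fv (fst x) \<le> snd x"
  by (erule P_cases) (simp_all add: fv_inf rV)

lemma P_root: "x \<in> P \<Longrightarrow> fst x = r \<Longrightarrow> x = (r,\<infinity>)"
  by (erule P_cases) simp_all

lemma P_inf: "x \<in> P \<Longrightarrow> snd x = \<infinity> \<Longrightarrow> x = (r,\<infinity>)"
  by (erule P_cases) simp_all

lemma P_fin: "x \<in> P \<Longrightarrow> snd x \<noteq> \<infinity> \<Longrightarrow> fst x \<in> V \<and> fst x \<noteq> r \<and> snd x < fv (par (fst x))"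
  by (erule P_cases) simp_all

lemma lee_def': "lee x y \<longleftrightarrow> snd x \<le> snd y \<and> (fst x, fst y) \<in> E\<^sup>*"
  by (simp add: mt_le_def)

lemma lee_refl: "lee x x" by (simp add: mt_le_def)

lemma lee_trans: "lee x y \<Longrightarrow> lee y z \<Longrightarrow> lee x z"
  by (auto simp: mt_le_def)

lemma lee_same: "x \<in> P \<Longrightarrow> y \<in> P \<Longrightarrow> lee x y \<Longrightarrow> snd x = snd y \<Longrightarrow> x = y"
proof -
  assume xP: "x \<in> P" and yP: "y \<in> P" and l: "lee x y" and s: "snd x = snd y"
  have fe: "fst x = fst y"
  proof (rule ccontr)
    assume ne: "fst x \<noteq> fst y"
    have rt: "(fst x, fst y) \<in> E\<^sup>*" using l by (simp add: mt_le_def)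
    from rt_step[OF rt ne] have a: "fst x \<in> V" "fst x \<noteq> r" "(par (fst x), fst y) \<in> E\<^sup>*" by auto
    have "snd x \<noteq> \<infinity>" using P_inf[OF xP] a by auto
    then have "snd x < fv (par (fst x))" using P_fin[OF xP] by auto
    also have "\<dots> \<le> fv (fst y)" using rt_fv[OF a(3)] par_in a by auto
    also have "\<dots> \<le> snd y" using P_fv[OF yP] .
    finally show False using s by simp
  qed
  then show ?thesis using s by (simp add: prod_eq_iff)
qed

lemma lee_antisym: "x \<in> P \<Longrightarrow> y \<in> P \<Longrightarrow> lee x y \<Longrightarrow> lee y x \<Longrightarrow> x = y"
proof -
  assume a: "x \<in> P" "y \<in> P" "lee x y" "lee y x"
  then have "snd x = snd y" by (auto simp: mt_le_def)
  then show ?thesis by (rule lee_same[OF a(1,2,3)])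
qed

lemma tree_prop:
  assumes "x \<in> P" "y1 \<in> P" "y2 \<in> P" "lee x y1" "lee x y2" "snd y1 \<le> snd y2"
  shows "lee y1 y2"
proof -
  have c: "(fst y1, fst y2) \<in> E\<^sup>* \<or> (fst y2, fst y1) \<in> E\<^sup>*"
    using rt_chain assms(4,5) by (auto simp: mt_le_def)
  show ?thesis
  proof (rule ccontr)
    assume nl: "\<not> lee y1 y2"
    then have n: "(fst y1, fst y2) \<notin> E\<^sup>*" using assms(6) by (simp add: mt_le_def)
    then have rt: "(fst y2, fst y1) \<in> E\<^sup>*" and ne: "fst y2 \<noteq> fst y1" using c by auto
    from rt_step[OF rt ne] have a: "fst y2 \<in> V" "fst y2 \<noteq> r" "(par (fst y2), fst y1) \<in> E\<^sup>*" by auto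
    have "snd y2 \<noteq> \<infinity>" using P_inf[OF assms(3)] a by auto
    then have "snd y2 < fv (par (fst y2))" using P_fin[OF assms(3)] by auto
    also have "\<dots> \<le> fv (fst y1)" using rt_fv[OF a(3)] par_in a by auto
    also have "\<dots> \<le> snd y1" using P_fv[OF assms(2)] .
    finally show False using assms(6) by simp
  qed
qed

lemma root_P: "(r,\<infinity>) \<in> P" by (simp add: mt_points_def)

lemma lee_root: "x \<in> P \<Longrightarrow> lee x (r,\<infinity>)"
  using to_root P_V by (auto simp: mt_le_def)


lemma lee_fst: "lee x y \<Longrightarrow> (fst x, fst y) \<in> E\<^sup>*" by (simp add: mt_le_def)
lemma lee_snd: "lee x y \<Longrightarrow> snd x \<le> snd y" by (simp add: mt_le_def)

lemma anc_ex:
  assumes xP: "x \<in> P" and hx: "snd x \<le> h" and hi: "h \<noteq> \<infinity>"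
  shows "\<exists>y\<in>P. lee x y \<and> snd y = h"
proof -
  have sx: "snd x \<noteq> \<infinity>" using hx hi by auto
  have xv: "fst x \<in> V" "fst x \<noteq> r" using P_fin[OF xP sx] by auto
  define S where "S = {w \<in> V. (fst x, w) \<in> E\<^sup>* \<and> fv w \<le> h}"
  have finS: "finite S" using finV by (simp add: S_def)
  have xS: "fst x \<in> S" using xv P_fv[OF xP] hx by (auto simp: S_def)
  have ne: "fv ` S \<noteq> {}" using xS by auto
  have "Max (fv ` S) \<in> fv ` S" using Max_in[OF _ ne] finS by simp
  then obtain w where wS: "w \<in> S" and wm: "fv w = Max (fv ` S)" by auto
  have wmax: "\<And>w'. w' \<in> S \<Longrightarrow> fv w' \<le> fv w" using wm finS by simp
  have w: "w \<in> V" "(fst x, w) \<in> E\<^sup>*" "fv w \<le> h" using wS by (auto simp: S_def)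
  have wr: "w \<noteq> r" using w fv_inf[of r] rV hi by auto
  have pw: "par w \<in> V" "(fst x, par w) \<in> E\<^sup>*"
    using par_in[OF w(1) wr] w(2) E_iff[of w "par w"] w(1) wr
    by (auto intro: rtrancl_into_rtrancl)
  have "h < fv (par w)"
  proof (rule ccontr)
    assume "\<not> h < fv (par w)"
    then have "par w \<in> S" using pw by (auto simp: S_def)
    then have "fv (par w) \<le> fv w" by (rule wmax)
    then show False using fv_less[OF w(1) wr] by simp
  qed
  then have "(w,h) \<in> P" using w wr by (simp add: P_iff)
  moreover have "lee x (w,h)" using hx w by (simp add: mt_le_def)
  ultimately show ?thesis by force
qed

lemma anc_uniq: "x \<in> P \<Longrightarrow> y1 \<in> P \<Longrightarrow> y2 \<in> P \<Longrightarrow> lee x y1 \<Longrightarrow> lee x y2 \<Longrightarrow> snd y1 = snd y2 \<Longrightarrow> y1 = y2"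
  by (metis tree_prop lee_same order_refl)

lemma anc_props:
  assumes "x \<in> P" "snd x \<le> h" "h \<noteq> \<infinity>"
  shows "anc h x \<in> P \<and> lee x (anc h x) \<and> snd (anc h x) = h"
proof -
  have "\<exists>!y. y \<in> P \<and> lee x y \<and> snd y = h"
    using anc_ex[OF assms] anc_uniq[OF assms(1)] by blast
  then show ?thesis unfolding mt_anc_def by (rule theI')
qed

lemma anc_eq: "x \<in> P \<Longrightarrow> y \<in> P \<Longrightarrow> lee x y \<Longrightarrow> anc (snd y) x = y"
  unfolding mt_anc_def
  by (rule the_equality) (auto intro: anc_uniq)

lemma anc_self: "x \<in> P \<Longrightarrow> anc (snd x) x = x"
  using anc_eq lee_refl by blast

lemma anc_comp:
  assumes "x \<in> P" "snd x \<le> h1" "h1 \<le> h2" "h2 \<noteq> \<infinity>"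
  shows "anc h2 (anc h1 x) = anc h2 x"
proof -
  have h1: "h1 \<noteq> \<infinity>" using assms by auto
  have a1: "anc h1 x \<in> P" "lee x (anc h1 x)" "snd (anc h1 x) = h1" using anc_props[OF assms(1,2) h1] by auto
  have a2: "anc h2 (anc h1 x) \<in> P" "lee (anc h1 x) (anc h2 (anc h1 x))" "snd (anc h2 (anc h1 x)) = h2"
    using anc_props[OF a1(1) _ assms(4)] a1(3) assms(3) by auto
  have "lee x (anc h2 (anc h1 x))" using lee_trans a1(2) a2(2) by blast
  from anc_eq[OF assms(1) a2(1) this] a2(3) show ?thesis by simp
qed

lemma lvl_iff: "x \<in> lvl h \<longleftrightarrow> x \<in> P \<and> snd x = h"
  by (simp add: mt_level_def)

lemma anc_lvl: "x \<in> P \<Longrightarrow> snd x \<le> ereal h \<Longrightarrow> anc (ereal h) x \<in> lvl (ereal h)"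
  using anc_props[of x "ereal h"] by (simp add: lvl_iff)

lemma anc_lee: "x \<in> P \<Longrightarrow> snd x \<le> ereal h \<Longrightarrow> lee x (anc (ereal h) x)"
  using anc_props[of x "ereal h"] by simp

lemma anc_of_lee: "x \<in> P \<Longrightarrow> y \<in> lvl h \<Longrightarrow> lee x y \<Longrightarrow> anc h x = y"
proof -
  assume a: "x \<in> P" "y \<in> lvl h" "lee x y"
  then have "y \<in> P" "snd y = h" by (auto simp: lvl_iff)
  with anc_eq[OF a(1) this(1) a(3)] show ?thesis by simp
qed

lemma disj: "x1 \<in> lvl h \<Longrightarrow> x2 \<in> lvl h \<Longrightarrow> y \<in> P \<Longrightarrow> lee y x1 \<Longrightarrow> lee y x2 \<Longrightarrow> x1 = x2"
  using anc_uniq by (auto simp: lvl_iff)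

lemma LP_iff: "u \<in> LP \<longleftrightarrow> fst u \<in> LV \<and> snd u = fv (fst u)"
  by (cases u) (auto simp: mt_leaves_def)

lemma LV_iff: "v \<in> LV \<longleftrightarrow> v \<in> V \<and> v \<noteq> r \<and> (\<forall>c \<in> V. c \<noteq> r \<longrightarrow> par c \<noteq> v)"
  by (auto simp: leaf_vertices_def)

lemma LP_P: "u \<in> LP \<Longrightarrow> u \<in> P"
proof -
  assume u: "u \<in> LP"
  then have "fst u \<in> V" "fst u \<noteq> r" "snd u = fv (fst u)" by (auto simp: LP_iff LV_iff)
  then show ?thesis using fv_less[of "fst u"] by (simp add: P_iff)
qed

lemma LP_fin: "u \<in> LP \<Longrightarrow> \<exists>h::real. snd u = ereal h \<and> 0 \<le> h"
proof -
  assume u: "u \<in> LP"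
  then have a: "fst u \<in> V" "fst u \<noteq> r" "snd u = fv (fst u)" "fst u \<in> LV" by (auto simp: LP_iff LV_iff)
  have "fv (fst u) \<noteq> \<infinity>" "fv (fst u) \<noteq> -\<infinity>" "0 \<le> fv (fst u)"
    using fv_inf fv_ninf leaf_nn a by auto
  then show ?thesis using a(3) by (cases "fv (fst u)") auto
qed

lemma leaf_min: "u \<in> LP \<Longrightarrow> y \<in> P \<Longrightarrow> lee y u \<Longrightarrow> y = u"
proof -
  assume u: "u \<in> LP" and y: "y \<in> P" and l: "lee y u"
  have a: "fst u \<in> V" "fst u \<noteq> r" "snd u = fv (fst u)" "\<forall>c \<in> V. c \<noteq> r \<longrightarrow> par c \<noteq> fst u"
    using u by (auto simp: LP_iff LV_iff)
  have "fst y = fst u"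
  proof (rule ccontr)
    assume ne: "fst y \<noteq> fst u"
    have "(fst y, fst u) \<in> E\<^sup>*" using l by (simp add: mt_le_def)
    then show False
    proof (rule rtranclE)
      assume "fst y = fst u" then show False using ne by simp
    next
      fix c assume "(c, fst u) \<in> E"
      then have "c \<in> V" "c \<noteq> r" "par c = fst u" by (auto simp: E_iff)
      then show False using a(4) by blast
    qed
  qed
  moreover have "snd y = snd u" using l P_fv[OF y] a(3) \<open>fst y = fst u\<close>
    by (simp add: mt_le_def)
  ultimately show ?thesis by (simp add: prod_eq_iff)
qed

lemma leaf_below: "x \<in> P \<Longrightarrow> \<exists>u\<in>LP. lee u x"
proof -
  assume xP: "x \<in> P"
  show ?thesis
  proof (cases "fst x = r")
    case True
    then have xr: "x = (r,\<infinity>)" using P_root xP by simp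
    obtain v where v: "v \<in> LV" using leaf0 by auto
    have "(v, fv v) \<in> LP" using v by (simp add: LP_iff)
    then show ?thesis using lee_root[OF LP_P] xr by blast
  next
    case False
    define S where "S = {w \<in> V. (w, fst x) \<in> E\<^sup>*}"
    have finS: "finite S" using finV by (simp add: S_def)
    have xS: "fst x \<in> S" using P_V[OF xP] by (auto simp: S_def)
    have ne: "fv ` S \<noteq> {}" using xS by auto
    have "Min (fv ` S) \<in> fv ` S" using Min_in[OF _ ne] finS by simp
    then obtain w where wS: "w \<in> S" and wm: "fv w = Min (fv ` S)" by auto
    have wmin: "\<And>w'. w' \<in> S \<Longrightarrow> fv w \<le> fv w'" using wm finS by simp
    have w: "w \<in> V" "(w, fst x) \<in> E\<^sup>*" using wS by (auto simp: S_def)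
    have wr: "w \<noteq> r" using w(2) rt_root False by blast
    have "w \<in> LV"
    proof -
      have "par c \<noteq> w" if "c \<in> V" "c \<noteq> r" for c
      proof
        assume pc: "par c = w"
        then have "(c, w) \<in> E" using that by (simp add: E_iff)
        then have "c \<in> S" using w(2) that(1) by (auto simp: S_def intro: converse_rtrancl_into_rtrancl)
        then have "fv w \<le> fv c" by (rule wmin)
        then show False using fv_less[OF that] pc by simp
      qed
      then show ?thesis using w wr by (simp add: LV_iff)
    qed
    then have uL: "(w, fv w) \<in> LP" by (simp add: LP_iff)
    have "fv w \<le> fv (fst x)" using rt_fv w by blast
    then have "lee (w, fv w) x" using P_fv[OF xP] w(2) by (simp add: mt_le_def)
    then show ?thesis using uL by blast
  qed
qed

lemma lca_ex:
  assumes xP: "x \<in> P" and yP: "y \<in> P"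
  shows "\<exists>z\<in>P. lee x z \<and> lee y z \<and> (\<forall>w\<in>P. lee x w \<and> lee y w \<longrightarrow> lee z w)"
proof -
  define C where "C = {z \<in> P. lee x z \<and> lee y z}"
  have rootC: "(r,\<infinity>) \<in> C" using root_P lee_root xP yP by (simp add: C_def)
  have "fst ` C \<subseteq> V" using P_V by (auto simp: C_def)
  then have finW: "finite (fst ` C)" using finV by (rule finite_subset)
  have ne: "fv ` fst ` C \<noteq> {}" using rootC by auto
  have "Min (fv ` fst ` C) \<in> fv ` fst ` C" using Min_in[OF _ ne] finW by simp
  then obtain z1 where z1C: "z1 \<in> C" and wm: "fv (fst z1) = Min (fv ` fst ` C)" by auto
  define w0 where "w0 = fst z1"
  have wmin: "\<And>z. z \<in> C \<Longrightarrow> fv w0 \<le> fv (fst z)" using wm finW by (simp add: w0_def)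
  have z1: "z1 \<in> P" "lee x z1" "lee y z1" using z1C by (auto simp: C_def)
  define h0 where "h0 = max (fv w0) (max (snd x) (snd y))"
  have h0le: "h0 \<le> snd z1" using P_fv[OF z1(1)] lee_snd[OF z1(2)] lee_snd[OF z1(3)]
    by (simp add: h0_def w0_def)
  have z0P: "(w0, h0) \<in> P"
  proof (cases "w0 = r")
    case True
    have "fv r = \<infinity>" using fv_inf rV by simp
    then have "h0 = \<infinity>" using True by (simp add: h0_def)
    then show ?thesis using True root_P by simp
  next
    case False
    have "snd z1 \<noteq> \<infinity>" using P_inf[OF z1(1)] False by (auto simp: w0_def)
    then have a: "w0 \<in> V" "snd z1 < fv (par w0)" using P_fin[OF z1(1)] by (auto simp: w0_def)
    have "fv w0 \<le> h0" by (simp add: h0_def)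
    moreover have "h0 < fv (par w0)" using h0le a(2) by (rule le_less_trans)
    ultimately show ?thesis using P_intro a(1) False by blast
  qed
  have lx: "lee x (w0,h0)" using lee_fst[OF z1(2)] by (simp add: mt_le_def h0_def w0_def le_max_iff_disj)
  have ly: "lee y (w0,h0)" using lee_fst[OF z1(3)] by (simp add: mt_le_def h0_def w0_def le_max_iff_disj)
  have least: "lee (w0,h0) w" if wP: "w \<in> P" and lw: "lee x w" "lee y w" for w
  proof (cases "h0 \<le> snd w")
    case True
    then show ?thesis using tree_prop[OF xP z0P wP lx lw(1)] by simp
  next
    case False
    then have "lee w (w0,h0)" using tree_prop[OF xP wP z0P lw(1) lx] by simp
    then have rt: "(fst w, w0) \<in> E\<^sup>*" by (simp add: mt_le_def)
    have "w \<in> C" using wP lw by (simp add: C_def)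
    then have "fv w0 \<le> fv (fst w)" by (rule wmin)
    then have "fst w = w0" using rt_fv_strict[OF rt] by (meson not_le)
    then have "h0 \<le> snd w" using P_fv[OF wP] lee_snd[OF lw(1)] lee_snd[OF lw(2)] by (simp add: h0_def)
    then show ?thesis using False by simp
  qed
  show ?thesis using z0P lx ly least by blast
qed

lemma lca_props:
  assumes "x \<in> P" "y \<in> P"
  shows "lca x y \<in> P \<and> lee x (lca x y) \<and> lee y (lca x y) \<and> (\<forall>w\<in>P. lee x w \<and> lee y w \<longrightarrow> lee (lca x y) w)"
proof -
  obtain z where z: "z \<in> P" "lee x z" "lee y z" "\<forall>w\<in>P. lee x w \<and> lee y w \<longrightarrow> lee z w"
    using lca_ex[OF assms] by blast
  have "\<exists>!z. z \<in> P \<and> lee x z \<and> lee y z \<and> (\<forall>w\<in>P. lee x w \<and> lee y w \<longrightarrow> lee z w)"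
  proof (rule ex1I[of _ z])
    fix z' assume "z' \<in> P \<and> lee x z' \<and> lee y z' \<and> (\<forall>w\<in>P. lee x w \<and> lee y w \<longrightarrow> lee z' w)"
    then show "z' = z" using z lee_antisym[of z' z] by blast
  qed (use z in blast)
  then show ?thesis unfolding mt_lca_def by (rule theI')
qed

lemma sub_iff: "y \<in> sub x \<longleftrightarrow> y \<in> P \<and> lee y x"
  by (simp add: mt_subtree_def)


lemma anc_via: "x \<in> P \<Longrightarrow> z \<in> P \<Longrightarrow> lee x z \<Longrightarrow> snd z \<le> H \<Longrightarrow> H \<noteq> \<infinity> \<Longrightarrow> anc H x = anc H z"
proof -
  assume a: "x \<in> P" "z \<in> P" "lee x z" "snd z \<le> H" "H \<noteq> \<infinity>"
  have y: "anc H z \<in> P" "lee z (anc H z)" "snd (anc H z) = H" using anc_props[OF a(2,4,5)] by auto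
  have "lee x (anc H z)" using lee_trans a(3) y(2) by blast
  from anc_eq[OF a(1) y(1) this] y(3) show ?thesis by simp
qed

lemma hm_ex: "u1 \<in> LP \<Longrightarrow> u2 \<in> LP \<Longrightarrow> \<exists>m::real. ereal m = max (snd u1) (snd u2) \<and> 0 \<le> m"
proof -
  assume "u1 \<in> LP" "u2 \<in> LP"
  then obtain h1 h2 :: real where "snd u1 = ereal h1" "0 \<le> h1" "snd u2 = ereal h2" "0 \<le> h2"
    using LP_fin by metis
  then show ?thesis by (intro exI[of _ "max h1 h2"]) auto
qed

lemma merged:
  assumes u: "u1 \<in> LP" "u2 \<in> LP" and m: "ereal m = max (snd u1) (snd u2)"
    and eq: "anc (ereal m) u1 = anc (ereal m) u2"
  shows "u1 = u2"
proof -
  have P: "u1 \<in> P" "u2 \<in> P" using u LP_P by auto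
  have s: "snd u1 \<le> ereal m" "snd u2 \<le> ereal m" using m by (metis max.cobounded1 max.cobounded2)+
  show ?thesis
  proof (cases "snd u1 \<le> snd u2")
    case True
    then have "ereal m = snd u2" using m by (simp add: max_def)
    then have "anc (ereal m) u2 = u2" using anc_self[OF P(2)] by simp
    then have "lee u1 u2" using anc_lee[OF P(1) s(1)] eq by simp
    then show ?thesis using leaf_min[OF u(2) P(1)] by simp
  next
    case False
    then have "ereal m = snd u1" using m by (simp add: max_def)
    then have "anc (ereal m) u1 = u1" using anc_self[OF P(1)] by simp
    then have "lee u2 u1" using anc_lee[OF P(2) s(2)] eq by simp
    then show ?thesis using leaf_min[OF u(1) P(2)] by simp
  qed
qed

lemma LL_iff: "u1 \<in> LP \<Longrightarrow> u2 \<in> LP \<Longrightarrow> ereal m = max (snd u1) (snd u2) \<Longrightarrow>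
   (u1,u2) \<in> layer_to_leaf V r par fv ordr \<longleftrightarrow> (anc (ereal m) u1, anc (ereal m) u2) \<in> ordr m"
  by (simp add: layer_to_leaf_def Let_def) (metis real_of_ereal.simps(1))

end

locale LO = MT +
  fixes ord :: "real \<Rightarrow> (('a \<times> ereal) \<times> ('a \<times> ereal)) set"
  assumes lo: "layer_order V r par fv ord"
begin

abbreviation "L \<equiv> layer_to_leaf V r par fv ord"

lemma lin: "0 \<le> h \<Longrightarrow> linear_order_on (lvl (ereal h)) (ord h)"
  using lo by (simp add: layer_order_def)

lemma cons: "0 \<le> h1 \<Longrightarrow> h1 \<le> h2 \<Longrightarrow> (x1,x2) \<in> ord h1 \<Longrightarrow> (anc (ereal h2) x1, anc (ereal h2) x2) \<in> ord h2"
proof -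
  assume a: "0 \<le> h1" "h1 \<le> h2" "(x1,x2) \<in> ord h1"
  have "ord h1 \<subseteq> lvl (ereal h1) \<times> lvl (ereal h1)" using lin[OF a(1)]
    by (simp add: linear_order_on_def partial_order_on_def preorder_on_def)
  then have "x1 \<in> lvl (ereal h1)" "x2 \<in> lvl (ereal h1)" using a(3) by auto
  then show ?thesis using lo a unfolding layer_order_def by blast
qed

lemma ord_sub: "0 \<le> h \<Longrightarrow> (a,b) \<in> ord h \<Longrightarrow> a \<in> lvl (ereal h) \<and> b \<in> lvl (ereal h)"
  using lin[of h] by (auto simp: linear_order_on_def partial_order_on_def preorder_on_def)

lemma ord_refl: "0 \<le> h \<Longrightarrow> a \<in> lvl (ereal h) \<Longrightarrow> (a,a) \<in> ord h"
  using lin[of h] by (auto simp: linear_order_on_def partial_order_on_def preorder_on_def refl_on_def)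

lemma ord_antisym: "0 \<le> h \<Longrightarrow> (a,b) \<in> ord h \<Longrightarrow> (b,a) \<in> ord h \<Longrightarrow> a = b"
  using lin[of h] unfolding linear_order_on_def partial_order_on_def antisym_def by blast

lemma ord_trans: "0 \<le> h \<Longrightarrow> (a,b) \<in> ord h \<Longrightarrow> (b,c) \<in> ord h \<Longrightarrow> (a,c) \<in> ord h"
  using lin[of h] unfolding linear_order_on_def partial_order_on_def preorder_on_def trans_def by blast

lemma ord_total: "0 \<le> h \<Longrightarrow> a \<in> lvl (ereal h) \<Longrightarrow> b \<in> lvl (ereal h) \<Longrightarrow> a \<noteq> b \<Longrightarrow> (a,b) \<in> ord h \<or> (b,a) \<in> ord h"
  using lin[of h] unfolding linear_order_on_def total_on_def by blast

lemma L_iff: "(u1,u2) \<in> L \<longleftrightarrow> u1 \<in> LP \<and> u2 \<in> LP \<and>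
   (anc (max (snd u1) (snd u2)) u1, anc (max (snd u1) (snd u2)) u2) \<in> ord (real_of_ereal (max (snd u1) (snd u2)))"
  by (simp add: layer_to_leaf_def Let_def)

lemma L_iff': "u1 \<in> LP \<Longrightarrow> u2 \<in> LP \<Longrightarrow> ereal m = max (snd u1) (snd u2) \<Longrightarrow>
   (u1,u2) \<in> L \<longleftrightarrow> (anc (ereal m) u1, anc (ereal m) u2) \<in> ord m"
  using L_iff[of u1 u2] by (metis real_of_ereal.simps(1))

lemma lift:
  assumes L: "(u1,u2) \<in> L" and h: "snd u1 \<le> ereal h" "snd u2 \<le> ereal h"
  shows "(anc (ereal h) u1, anc (ereal h) u2) \<in> ord h"
proof -
  have u: "u1 \<in> LP" "u2 \<in> LP" using L L_iff by auto
  obtain m where m: "ereal m = max (snd u1) (snd u2)" "0 \<le> m" using hm_ex[OF u] by blast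
  have mh: "m \<le> h" using m(1) h by (metis ereal_less_eq(3) max.bounded_iff)
  have o: "(anc (ereal m) u1, anc (ereal m) u2) \<in> ord m" using L_iff'[OF u m(1)] L by simp
  have P: "u1 \<in> P" "u2 \<in> P" using u LP_P by auto
  have s: "snd u1 \<le> ereal m" "snd u2 \<le> ereal m" using m(1) by (metis max.cobounded1 max.cobounded2)+
  from cons[OF m(2) mh o] show ?thesis
    using anc_comp[OF P(1) s(1)] anc_comp[OF P(2) s(2)] mh by simp
qed

lemma L_at:
  assumes u: "u1 \<in> LP" "u2 \<in> LP" and h: "snd u1 \<le> ereal h" "snd u2 \<le> ereal h"
    and ne: "anc (ereal h) u1 \<noteq> anc (ereal h) u2"
  shows "(u1,u2) \<in> L \<longleftrightarrow> (anc (ereal h) u1, anc (ereal h) u2) \<in> ord h"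
proof
  assume "(u1,u2) \<in> L" then show "(anc (ereal h) u1, anc (ereal h) u2) \<in> ord h" using lift h by blast
next
  assume o: "(anc (ereal h) u1, anc (ereal h) u2) \<in> ord h"
  obtain m where m: "ereal m = max (snd u1) (snd u2)" "0 \<le> m" using hm_ex[OF u] by blast
  have mh: "m \<le> h" using m(1) h by (metis ereal_less_eq(3) max.bounded_iff)
  have P: "u1 \<in> P" "u2 \<in> P" using u LP_P by auto
  have s: "snd u1 \<le> ereal m" "snd u2 \<le> ereal m" using m(1) by (metis max.cobounded1 max.cobounded2)+
  have c: "anc (ereal h) (anc (ereal m) u1) = anc (ereal h) u1" "anc (ereal h) (anc (ereal m) u2) = anc (ereal h) u2"
    using anc_comp[OF P(1) s(1)] anc_comp[OF P(2) s(2)] mh by auto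
  have ne2: "anc (ereal m) u1 \<noteq> anc (ereal m) u2" using ne c by metis
  have "(anc (ereal m) u1, anc (ereal m) u2) \<in> ord m"
  proof (rule ccontr)
    assume n: "\<not> ?thesis"
    then have "(anc (ereal m) u2, anc (ereal m) u1) \<in> ord m"
      using ord_total[OF m(2) anc_lvl[OF P(1) s(1)] anc_lvl[OF P(2) s(2)] ne2] by blast
    from cons[OF m(2) mh this] c have "(anc (ereal h) u2, anc (ereal h) u1) \<in> ord h" by simp
    then show False using ord_antisym[OF _ o] m(2) mh ne by simp
  qed
  then show "(u1,u2) \<in> L" using L_iff'[OF u m(1)] by simp
qed


lemma L_sub: "L \<subseteq> LP \<times> LP" using L_iff by auto

lemma L_refl: "u \<in> LP \<Longrightarrow> (u,u) \<in> L"
proof -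
  assume u: "u \<in> LP"
  obtain m where m: "ereal m = max (snd u) (snd u)" "0 \<le> m" using hm_ex[OF u u] by blast
  have P: "u \<in> P" using LP_P u by simp
  have s: "snd u \<le> ereal m" using m by simp
  show ?thesis using L_iff'[OF u u m(1)] ord_refl[OF m(2) anc_lvl[OF P s]] by simp
qed

lemma L_antisym: "(u1,u2) \<in> L \<Longrightarrow> (u2,u1) \<in> L \<Longrightarrow> u1 = u2"
proof -
  assume a: "(u1,u2) \<in> L" "(u2,u1) \<in> L"
  then have u: "u1 \<in> LP" "u2 \<in> LP" using L_iff by auto
  obtain m where m: "ereal m = max (snd u1) (snd u2)" "0 \<le> m" using hm_ex[OF u] by blast
  have m': "ereal m = max (snd u2) (snd u1)" using m(1) by (simp add: max.commute)
  have "anc (ereal m) u1 = anc (ereal m) u2"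
    using ord_antisym[OF m(2)] L_iff'[OF u m(1)] L_iff'[OF u(2,1) m'] a by blast
  then show ?thesis using merged[OF u m(1)] by simp
qed

lemma L_total: "u1 \<in> LP \<Longrightarrow> u2 \<in> LP \<Longrightarrow> u1 \<noteq> u2 \<Longrightarrow> (u1,u2) \<in> L \<or> (u2,u1) \<in> L"
proof -
  assume u: "u1 \<in> LP" "u2 \<in> LP" and ne: "u1 \<noteq> u2"
  obtain m where m: "ereal m = max (snd u1) (snd u2)" "0 \<le> m" using hm_ex[OF u] by blast
  have m': "ereal m = max (snd u2) (snd u1)" using m(1) by (simp add: max.commute)
  have P: "u1 \<in> P" "u2 \<in> P" using u LP_P by auto
  have s: "snd u1 \<le> ereal m" "snd u2 \<le> ereal m" using m(1) by (metis max.cobounded1 max.cobounded2)+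
  have "anc (ereal m) u1 \<noteq> anc (ereal m) u2" using merged[OF u m(1)] ne by blast
  from ord_total[OF m(2) anc_lvl[OF P(1) s(1)] anc_lvl[OF P(2) s(2)] this]
  show ?thesis using L_iff'[OF u m(1)] L_iff'[OF u(2,1) m'] by blast
qed

lemma L_trans: "(u1,u2) \<in> L \<Longrightarrow> (u2,u3) \<in> L \<Longrightarrow> (u1,u3) \<in> L"
proof -
  assume a: "(u1,u2) \<in> L" "(u2,u3) \<in> L"
  then have u: "u1 \<in> LP" "u2 \<in> LP" "u3 \<in> LP" using L_iff by auto
  have P: "u1 \<in> P" "u2 \<in> P" "u3 \<in> P" using u LP_P by auto
  obtain h1 where h1: "snd u1 = ereal h1" "0 \<le> h1" using LP_fin u(1) by blast
  obtain h2 where h2: "snd u2 = ereal h2" "0 \<le> h2" using LP_fin u(2) by blast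
  obtain h3 where h3: "snd u3 = ereal h3" "0 \<le> h3" using LP_fin u(3) by blast
  define H where "H = max h1 (max h2 h3)"
  have H0: "0 \<le> H" using h1 by (simp add: H_def)
  have s: "snd u1 \<le> ereal H" "snd u2 \<le> ereal H" "snd u3 \<le> ereal H" using h1 h2 h3 by (auto simp: H_def le_max_iff_disj)
  have o12: "(anc (ereal H) u1, anc (ereal H) u2) \<in> ord H" using lift[OF a(1) s(1,2)] .
  have o23: "(anc (ereal H) u2, anc (ereal H) u3) \<in> ord H" using lift[OF a(2) s(2,3)] .
  have o13: "(anc (ereal H) u1, anc (ereal H) u3) \<in> ord H" using ord_trans[OF H0 o12 o23] .
  show ?thesis
  proof (cases "anc (ereal H) u1 = anc (ereal H) u3")
    case False
    then show ?thesis using L_at[OF u(1,3) s(1,3) False] o13 by simp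
  next
    case True
    then have b12: "anc (ereal H) u1 = anc (ereal H) u2" using ord_antisym[OF H0 o12] o23 by simp
    have l1: "lee u1 (anc (ereal H) u1)" "lee u2 (anc (ereal H) u2)" "lee u3 (anc (ereal H) u3)"
      using anc_lee P s by auto
    have "H = h1 \<or> H = h2 \<or> H = h3" by (auto simp: H_def max_def)
    then show ?thesis
    proof (elim disjE)
      assume "H = h1"
      then have "anc (ereal H) u1 = u1" using anc_self[OF P(1)] h1 by simp
      then have "u3 = u1" using leaf_min[OF u(1) P(3)] l1(3) True by simp
      then show ?thesis using L_refl u by simp
    next
      assume "H = h3"
      then have "anc (ereal H) u3 = u3" using anc_self[OF P(3)] h3 by simp
      then have "u1 = u3" using leaf_min[OF u(3) P(1)] l1(1) True by simp
      then show ?thesis using L_refl u by simp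
    next
      assume "H = h2"
      then have "anc (ereal H) u2 = u2" using anc_self[OF P(2)] h2 by simp
      then have "u1 = u2" using leaf_min[OF u(2) P(1)] l1(1) b12 by simp
      then show ?thesis using a(2) by simp
    qed
  qed
qed

lemma L_sep:
  assumes u: "u \<in> LP" "u1 \<in> LP" "u2 \<in> LP" and a: "(u1,u) \<in> L" "(u,u2) \<in> L"
  shows "u \<in> sub (lca u1 u2)"
proof -
  have P: "u \<in> P" "u1 \<in> P" "u2 \<in> P" using u LP_P by auto
  define z where "z = lca u1 u2"
  have z: "z \<in> P" "lee u1 z" "lee u2 z" using lca_props[OF P(2,3)] by (auto simp: z_def)
  have "lee u z"
  proof (cases "snd z = \<infinity>")
    case True
    then show ?thesis using P_inf[OF z(1)] lee_root[OF P(1)] by simp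
  next
    case False
    obtain h1 where h1: "snd u1 = ereal h1" "0 \<le> h1" using LP_fin u(2) by blast
    obtain h2 where h2: "snd u2 = ereal h2" "0 \<le> h2" using LP_fin u(3) by blast
    obtain h0 where h0: "snd u = ereal h0" "0 \<le> h0" using LP_fin u(1) by blast
    have "snd z \<noteq> -\<infinity>" using lee_snd[OF z(2)] h1 by auto
    then obtain hz where hz: "snd z = ereal hz" using False by (cases "snd z") auto
    define h where "h = max h0 (max h1 h2)"
    define H where "H = max h hz"
    have H0: "0 \<le> H" using h0 by (simp add: H_def h_def)
    have s: "snd u \<le> ereal H" "snd u1 \<le> ereal H" "snd u2 \<le> ereal H" "snd z \<le> ereal H"
      using h0 h1 h2 hz by (auto simp: H_def h_def le_max_iff_disj)
    have A1: "anc (ereal H) u1 = anc (ereal H) z" using anc_via[OF P(2) z(1) z(2) s(4)] by simp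
    have A2: "anc (ereal H) u2 = anc (ereal H) z" using anc_via[OF P(3) z(1) z(3) s(4)] by simp
    have o1: "(anc (ereal H) z, anc (ereal H) u) \<in> ord H" using lift[OF a(1) s(2,1)] A1 by simp
    have o2: "(anc (ereal H) u, anc (ereal H) z) \<in> ord H" using lift[OF a(2) s(1,3)] A2 by simp
    have eq: "anc (ereal H) u = anc (ereal H) z" using ord_antisym[OF H0 o2 o1] .
    have lu: "lee u (anc (ereal H) z)" using anc_lee[OF P(1) s(1)] eq by simp
    show ?thesis
    proof (cases "H = hz")
      case True
      then have "anc (ereal H) z = z" using anc_self[OF z(1)] hz by simp
      then show ?thesis using lu by simp
    next
      case False
      then have "H = h" by (simp add: H_def max_def split: if_splits)
      then have "H = h0 \<or> H = h1 \<or> H = h2" by (auto simp: h_def max_def)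
      have l1: "lee u1 (anc (ereal H) z)" "lee u2 (anc (ereal H) z)"
        using anc_lee[OF P(2) s(2)] anc_lee[OF P(3) s(3)] A1 A2 by auto
      from \<open>H = h0 \<or> H = h1 \<or> H = h2\<close> show ?thesis
      proof (elim disjE)
        assume "H = h0"
        then have "anc (ereal H) u = u" using anc_self[OF P(1)] h0 by simp
        then have "u1 = u" using leaf_min[OF u(1) P(2)] l1(1) eq by simp
        then show ?thesis using z(2) by simp
      next
        assume "H = h1"
        then have "anc (ereal H) u1 = u1" using anc_self[OF P(2)] h1 by simp
        then have "u = u1" using leaf_min[OF u(2) P(1)] lu A1 by simp
        then show ?thesis using z(2) by simp
      next
        assume "H = h2"
        then have "anc (ereal H) u2 = u2" using anc_self[OF P(3)] h2 by simp
        then have "u = u2" using leaf_min[OF u(3) P(1)] lu A2 by simp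
        then show ?thesis using z(3) by simp
      qed
    qed
  qed
  then show ?thesis using P(1) by (simp add: sub_iff z_def)
qed

theorem L_leaf_order: "leaf_order V r par fv L"
proof -
  have "linear_order_on LP L"
    unfolding linear_order_on_def partial_order_on_def preorder_on_def
  proof (intro conjI)
    show "L \<subseteq> LP \<times> LP" by (rule L_sub)
    show "refl_on LP L" using L_refl by (simp add: refl_on_def)
    show "trans L" using L_trans by (auto simp: trans_def)
    show "antisym L" using L_antisym by (auto simp: antisym_def)
    show "total_on LP L" using L_total by (auto simp: total_on_def)
  qed
  then show ?thesis unfolding leaf_order_def using L_sep by blast
qed

theorem T_L: "0 \<le> h \<Longrightarrow> leaf_to_layer V r par fv L h = ord h"
proof -
  assume h0: "0 \<le> h"
  show ?thesis
  proof (intro set_eqI iffI)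
    fix p assume p: "p \<in> leaf_to_layer V r par fv L h"
    obtain x1 x2 where px: "p = (x1,x2)" by (cases p)
    have x: "x1 \<in> lvl (ereal h)" "x2 \<in> lvl (ereal h)"
      and c: "x1 = x2 \<or> (\<forall>u1 \<in> LP \<inter> sub x1. \<forall>u2 \<in> LP \<inter> sub x2. (u1, u2) \<in> L)"
      using p px by (auto simp: leaf_to_layer_def)
    have xP: "x1 \<in> P" "x2 \<in> P" "snd x1 = ereal h" "snd x2 = ereal h" using x by (auto simp: lvl_iff)
    show "p \<in> ord h"
    proof (cases "x1 = x2")
      case True then show ?thesis using ord_refl[OF h0 x(1)] px by simp
    next
      case False
      obtain u1 where u1: "u1 \<in> LP" "lee u1 x1" using leaf_below[OF xP(1)] by blast
      obtain u2 where u2: "u2 \<in> LP" "lee u2 x2" using leaf_below[OF xP(2)] by blast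
      have "(u1,u2) \<in> L" using c False u1 u2 LP_P by (auto simp: sub_iff)
      moreover have s: "snd u1 \<le> ereal h" "snd u2 \<le> ereal h" using lee_snd[OF u1(2)] lee_snd[OF u2(2)] xP by auto
      ultimately have "(anc (ereal h) u1, anc (ereal h) u2) \<in> ord h" by (rule lift)
      moreover have "anc (ereal h) u1 = x1" "anc (ereal h) u2 = x2"
        using anc_of_lee LP_P u1 u2 x by auto
      ultimately show ?thesis using px by simp
    qed
  next
    fix p assume p: "p \<in> ord h"
    obtain x1 x2 where px: "p = (x1,x2)" by (cases p)
    have x: "x1 \<in> lvl (ereal h)" "x2 \<in> lvl (ereal h)" using ord_sub[OF h0] p px by auto
    have xP: "x1 \<in> P" "x2 \<in> P" "snd x1 = ereal h" "snd x2 = ereal h" using x by (auto simp: lvl_iff)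
    have "(u1,u2) \<in> L" if ne: "x1 \<noteq> x2" and u1: "u1 \<in> LP \<inter> sub x1" and u2: "u2 \<in> LP \<inter> sub x2" for u1 u2
    proof -
      have uu: "u1 \<in> LP" "lee u1 x1" "u2 \<in> LP" "lee u2 x2" "u1 \<in> P" "u2 \<in> P"
        using u1 u2 by (auto simp: sub_iff)
      have s: "snd u1 \<le> ereal h" "snd u2 \<le> ereal h" using lee_snd[OF uu(2)] lee_snd[OF uu(4)] xP by auto
      have a: "anc (ereal h) u1 = x1" "anc (ereal h) u2 = x2"
        using anc_of_lee uu x by auto
      show ?thesis using L_at[OF uu(1,3) s] a ne p px by simp
    qed
    then show "p \<in> leaf_to_layer V r par fv L h" using x px by (auto simp: leaf_to_layer_def)
  qed
qed

end

locale LF = MT +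
  fixes lo :: "(('a \<times> ereal) \<times> ('a \<times> ereal)) set"
  assumes lf: "leaf_order V r par fv lo"
begin

abbreviation "T \<equiv> leaf_to_layer V r par fv lo"

lemma lo_lin: "linear_order_on LP lo" using lf by (simp add: leaf_order_def)

lemma lo_sub: "(a,b) \<in> lo \<Longrightarrow> a \<in> LP \<and> b \<in> LP"
  using lo_lin by (auto simp: linear_order_on_def partial_order_on_def preorder_on_def)

lemma lo_refl: "a \<in> LP \<Longrightarrow> (a,a) \<in> lo"
  using lo_lin by (auto simp: linear_order_on_def partial_order_on_def preorder_on_def refl_on_def)

lemma lo_antisym: "(a,b) \<in> lo \<Longrightarrow> (b,a) \<in> lo \<Longrightarrow> a = b"
  using lo_lin unfolding linear_order_on_def partial_order_on_def antisym_def by blast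

lemma lo_trans: "(a,b) \<in> lo \<Longrightarrow> (b,c) \<in> lo \<Longrightarrow> (a,c) \<in> lo"
  using lo_lin unfolding linear_order_on_def partial_order_on_def preorder_on_def trans_def by blast

lemma lo_total: "a \<in> LP \<Longrightarrow> b \<in> LP \<Longrightarrow> a \<noteq> b \<Longrightarrow> (a,b) \<in> lo \<or> (b,a) \<in> lo"
  using lo_lin unfolding linear_order_on_def total_on_def by blast

lemma lo_sep: "u \<in> LP \<Longrightarrow> u1 \<in> LP \<Longrightarrow> u2 \<in> LP \<Longrightarrow> (u1,u) \<in> lo \<Longrightarrow> (u,u2) \<in> lo \<Longrightarrow> u \<in> sub (lca u1 u2)"
  using lf unfolding leaf_order_def by blast

lemma interval:
  assumes xP: "x \<in> P" and u: "u \<in> LP" "u1 \<in> LP" "u2 \<in> LP" and l: "lee u1 x" "lee u2 x"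
    and o: "(u1,u) \<in> lo" "(u,u2) \<in> lo"
  shows "lee u x"
proof -
  have P: "u1 \<in> P" "u2 \<in> P" using u LP_P by auto
  have "lee u (lca u1 u2)" using lo_sep[OF u o] by (simp add: sub_iff)
  moreover have "lee (lca u1 u2) x" using lca_props[OF P] xP l by blast
  ultimately show ?thesis by (rule lee_trans)
qed

lemma block_total:
  assumes x: "x1 \<in> lvl h" "x2 \<in> lvl h" and ne: "x1 \<noteq> x2"
  shows "(\<forall>a\<in>LP. lee a x1 \<longrightarrow> (\<forall>b\<in>LP. lee b x2 \<longrightarrow> (a,b) \<in> lo)) \<or>
         (\<forall>a\<in>LP. lee a x1 \<longrightarrow> (\<forall>b\<in>LP. lee b x2 \<longrightarrow> (b,a) \<in> lo))"
proof (rule ccontr)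
  assume "\<not> ?thesis"
  then obtain a b a' b' where ab: "a \<in> LP" "lee a x1" "b \<in> LP" "lee b x2" "(a,b) \<notin> lo"
    and ab': "a' \<in> LP" "lee a' x1" "b' \<in> LP" "lee b' x2" "(b',a') \<notin> lo" by blast
  have xP: "x1 \<in> P" "x2 \<in> P" using x by (auto simp: lvl_iff)
  have dis: "\<And>c d. c \<in> LP \<Longrightarrow> lee c x1 \<Longrightarrow> d \<in> LP \<Longrightarrow> lee d x2 \<Longrightarrow> c \<noteq> d"
    using disj[OF x] ne LP_P by blast
  have ba: "(b,a) \<in> lo" using lo_total[OF ab(1,3) dis[OF ab(1-4)]] ab(5) by blast
  have ab2: "(a',b') \<in> lo" using lo_total[OF ab'(1,3) dis[OF ab'(1-4)]] ab'(5) by blast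
  show False
  proof (cases "(a',b) \<in> lo")
    case True
    have "lee b x1" using interval[OF xP(1) ab(3) ab'(1) ab(1) ab'(2) ab(2) True ba] .
    then show False using dis[OF ab(3) _ ab(3) ab(4)] by blast
  next
    case False
    then have "(b,a') \<in> lo" using lo_total[OF ab(3) ab'(1)] dis[OF ab'(1,2) ab(3,4)] by blast
    have "lee a' x2" using interval[OF xP(2) ab'(1) ab(3) ab'(3) ab(4) ab'(4) \<open>(b,a') \<in> lo\<close> ab2] .
    then show False using dis[OF ab'(1,2) ab'(1)] by blast
  qed
qed

lemma T_iff: "(x1,x2) \<in> T h \<longleftrightarrow> x1 \<in> lvl (ereal h) \<and> x2 \<in> lvl (ereal h) \<and>
   (x1 = x2 \<or> (\<forall>a\<in>LP. lee a x1 \<longrightarrow> (\<forall>b\<in>LP. lee b x2 \<longrightarrow> (a,b) \<in> lo)))"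
  unfolding leaf_to_layer_def using LP_P by (auto simp: sub_iff)

lemma T_D: "(x1,x2) \<in> T h \<Longrightarrow> x1 \<noteq> x2 \<Longrightarrow> a \<in> LP \<Longrightarrow> lee a x1 \<Longrightarrow> b \<in> LP \<Longrightarrow> lee b x2 \<Longrightarrow> (a,b) \<in> lo"
  unfolding T_iff by blast
lemma T_lvl: "(x1,x2) \<in> T h \<Longrightarrow> x1 \<in> lvl (ereal h) \<and> x2 \<in> lvl (ereal h)"
  unfolding T_iff by blast
lemma T_refl: "x \<in> lvl (ereal h) \<Longrightarrow> (x,x) \<in> T h"
  unfolding T_iff by blast
lemma T_I: "x1 \<in> lvl (ereal h) \<Longrightarrow> x2 \<in> lvl (ereal h) \<Longrightarrow> (\<forall>a\<in>LP. lee a x1 \<longrightarrow> (\<forall>b\<in>LP. lee b x2 \<longrightarrow> (a,b) \<in> lo)) \<Longrightarrow> (x1,x2) \<in> T h"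
  unfolding T_iff by blast

lemma T_lin: "linear_order_on (lvl (ereal h)) (T h)"
  unfolding linear_order_on_def partial_order_on_def preorder_on_def
proof (intro conjI)
  show "T h \<subseteq> lvl (ereal h) \<times> lvl (ereal h)" using T_lvl by auto
  show "refl_on (lvl (ereal h)) (T h)" using T_refl by (auto simp: refl_on_def)
  show "antisym (T h)"
  proof (rule antisymI)
    fix x1 x2 assume a: "(x1,x2) \<in> T h" "(x2,x1) \<in> T h"
    show "x1 = x2"
    proof (rule ccontr)
      assume ne: "x1 \<noteq> x2"
      have x: "x1 \<in> lvl (ereal h)" "x2 \<in> lvl (ereal h)" using T_lvl[OF a(1)] by auto
      then have xP: "x1 \<in> P" "x2 \<in> P" by (auto simp: lvl_iff)
      obtain u1 where u1: "u1 \<in> LP" "lee u1 x1" using leaf_below[OF xP(1)] by blast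
      obtain u2 where u2: "u2 \<in> LP" "lee u2 x2" using leaf_below[OF xP(2)] by blast
      have "(u1,u2) \<in> lo" using T_D[OF a(1) ne u1 u2] .
      moreover have "(u2,u1) \<in> lo" using T_D[OF a(2) _ u2 u1] ne by simp
      ultimately have "u1 = u2" by (rule lo_antisym)
      then show False using disj[OF x LP_P[OF u1(1)] u1(2)] u2(2) ne by simp
    qed
  qed
  show "trans (T h)"
  proof (rule transI)
    fix x1 x2 x3 assume a: "(x1,x2) \<in> T h" "(x2,x3) \<in> T h"
    have x: "x1 \<in> lvl (ereal h)" "x2 \<in> lvl (ereal h)" "x3 \<in> lvl (ereal h)" using T_lvl[OF a(1)] T_lvl[OF a(2)] by auto
    show "(x1,x3) \<in> T h"
    proof (cases "x1 = x2 \<or> x2 = x3 \<or> x1 = x3")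
      case True
      then show ?thesis using a T_refl[OF x(1)] by auto
    next
      case False
      obtain u2 where u2: "u2 \<in> LP" "lee u2 x2" using leaf_below[of x2] x by (auto simp: lvl_iff)
      have "(c,d) \<in> lo" if "c \<in> LP" "lee c x1" "d \<in> LP" "lee d x3" for c d
      proof -
        have "(c,u2) \<in> lo" using T_D[OF a(1) _ that(1,2) u2] False by simp
        moreover have "(u2,d) \<in> lo" using T_D[OF a(2) _ u2 that(3,4)] False by simp
        ultimately show ?thesis by (rule lo_trans)
      qed
      then show ?thesis using T_I[OF x(1,3)] by blast
    qed
  qed
  show "total_on (lvl (ereal h)) (T h)"
  proof (unfold total_on_def, intro ballI impI)
    fix x1 x2 assume x: "x1 \<in> lvl (ereal h)" "x2 \<in> lvl (ereal h)" and ne: "x1 \<noteq> x2"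
    from block_total[OF x ne] show "(x1,x2) \<in> T h \<or> (x2,x1) \<in> T h"
    proof
      assume "\<forall>a\<in>LP. lee a x1 \<longrightarrow> (\<forall>b\<in>LP. lee b x2 \<longrightarrow> (a,b) \<in> lo)"
      then show ?thesis using T_I[OF x] by blast
    next
      assume "\<forall>a\<in>LP. lee a x1 \<longrightarrow> (\<forall>b\<in>LP. lee b x2 \<longrightarrow> (b,a) \<in> lo)"
      then have "\<forall>a\<in>LP. lee a x2 \<longrightarrow> (\<forall>b\<in>LP. lee b x1 \<longrightarrow> (a,b) \<in> lo)" by blast
      then show ?thesis using T_I[OF x(2,1)] by blast
    qed
  qed
qed

lemma T_layer: "layer_order V r par fv T"
  unfolding layer_order_def
proof (intro conjI allI impI ballI)
  fix h :: real show "linear_order_on (lvl (ereal h)) (T h)" by (rule T_lin)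
next
  fix h1 h2 :: real and x1 x2
  assume h: "0 \<le> h1 \<and> h1 \<le> h2" and x: "x1 \<in> lvl (ereal h1)" "x2 \<in> lvl (ereal h1)" and o: "(x1,x2) \<in> T h1"
  have xP: "x1 \<in> P" "x2 \<in> P" "snd x1 = ereal h1" "snd x2 = ereal h1" using x by (auto simp: lvl_iff)
  have s: "snd x1 \<le> ereal h2" "snd x2 \<le> ereal h2" using xP h by auto
  define y1 where "y1 = anc (ereal h2) x1"
  define y2 where "y2 = anc (ereal h2) x2"
  have y: "y1 \<in> lvl (ereal h2)" "y2 \<in> lvl (ereal h2)" using anc_lvl xP s by (auto simp: y1_def y2_def)
  have ly: "lee x1 y1" "lee x2 y2" using anc_lee xP s by (auto simp: y1_def y2_def)
  show "(y1, y2) \<in> T h2" unfolding y1_def[symmetric] y2_def[symmetric]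
  proof (cases "y1 = y2")
    case True then show ?thesis using T_refl[OF y(1)] by simp
  next
    case False
    then have ne: "x1 \<noteq> x2" by (auto simp: y1_def y2_def)
    from block_total[OF y False] show ?thesis
    proof
      assume "\<forall>a\<in>LP. lee a y1 \<longrightarrow> (\<forall>b\<in>LP. lee b y2 \<longrightarrow> (a,b) \<in> lo)"
      then show ?thesis using T_I[OF y] by blast
    next
      assume rev: "\<forall>a\<in>LP. lee a y1 \<longrightarrow> (\<forall>b\<in>LP. lee b y2 \<longrightarrow> (b,a) \<in> lo)"
      obtain u1 where u1: "u1 \<in> LP" "lee u1 x1" using leaf_below[OF xP(1)] by blast
      obtain u2 where u2: "u2 \<in> LP" "lee u2 x2" using leaf_below[OF xP(2)] by blast
      have l1: "lee u1 y1" "lee u2 y2" using lee_trans u1(2) u2(2) ly by blast+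
      have "(u1,u2) \<in> lo" using T_D[OF o ne u1 u2] .
      moreover have "(u2,u1) \<in> lo" using rev u1(1) u2(1) l1 by blast
      ultimately have "u1 = u2" by (rule lo_antisym)
      then have "y1 = y2" using disj[OF y LP_P[OF u1(1)] l1(1)] l1(2) by simp
      then show ?thesis using False by simp
    qed
  qed
qed

lemma L_T: "layer_to_leaf V r par fv T = lo"
proof (intro set_eqI iffI)
  fix p assume p: "p \<in> layer_to_leaf V r par fv T"
  obtain u1 u2 where pu: "p = (u1,u2)" by (cases p)
  have u: "u1 \<in> LP" "u2 \<in> LP" using p pu by (auto simp: layer_to_leaf_def)
  obtain m where m: "ereal m = max (snd u1) (snd u2)" "0 \<le> m" using hm_ex[OF u] by blast
  have P: "u1 \<in> P" "u2 \<in> P" using u LP_P by auto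
  have s: "snd u1 \<le> ereal m" "snd u2 \<le> ereal m" using m(1) by (metis max.cobounded1 max.cobounded2)+
  have o: "(anc (ereal m) u1, anc (ereal m) u2) \<in> T m" using LL_iff[OF u m(1)] p pu by simp
  show "p \<in> lo"
  proof (cases "anc (ereal m) u1 = anc (ereal m) u2")
    case True
    then have "u1 = u2" using merged[OF u m(1)] by simp
    then show ?thesis using lo_refl u pu by simp
  next
    case False
    from T_D[OF o False u(1) anc_lee[OF P(1) s(1)] u(2) anc_lee[OF P(2) s(2)]] show ?thesis using pu by simp
  qed
next
  fix p assume p: "p \<in> lo"
  obtain u1 u2 where pu: "p = (u1,u2)" by (cases p)
  have u: "u1 \<in> LP" "u2 \<in> LP" using p pu lo_sub by auto
  obtain m where m: "ereal m = max (snd u1) (snd u2)" "0 \<le> m" using hm_ex[OF u] by blast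
  have P: "u1 \<in> P" "u2 \<in> P" using u LP_P by auto
  have s: "snd u1 \<le> ereal m" "snd u2 \<le> ereal m" using m(1) by (metis max.cobounded1 max.cobounded2)+
  define a1 where "a1 = anc (ereal m) u1"
  define a2 where "a2 = anc (ereal m) u2"
  have a: "a1 \<in> lvl (ereal m)" "a2 \<in> lvl (ereal m)" "lee u1 a1" "lee u2 a2"
    using anc_lvl[OF P(1) s(1)] anc_lvl[OF P(2) s(2)] anc_lee[OF P(1) s(1)] anc_lee[OF P(2) s(2)]
    by (auto simp: a1_def a2_def)
  have "(a1,a2) \<in> T m"
  proof (cases "a1 = a2")
    case True then show ?thesis using T_refl[OF a(1)] by simp
  next
    case False
    from block_total[OF a(1,2) False] show ?thesis
    proof
      assume "\<forall>c\<in>LP. lee c a1 \<longrightarrow> (\<forall>d\<in>LP. lee d a2 \<longrightarrow> (c,d) \<in> lo)"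
      then show ?thesis using T_I[OF a(1,2)] by blast
    next
      assume "\<forall>c\<in>LP. lee c a1 \<longrightarrow> (\<forall>d\<in>LP. lee d a2 \<longrightarrow> (d,c) \<in> lo)"
      then have "(u2,u1) \<in> lo" using u a(3,4) by blast
      then have "u1 = u2" using lo_antisym p pu by simp
      then show ?thesis using False by (simp add: a1_def a2_def)
    qed
  qed
  then show "p \<in> layer_to_leaf V r par fv T" using LL_iff[OF u m(1)] pu by (simp add: a1_def a2_def)
qed

end


theorem theorem10:
  fixes V :: "'v set" and r :: 'v and par :: "'v \<Rightarrow> 'v" and fv :: "'v \<Rightarrow> ereal"
  assumes "merge_tree V r par fv"
  shows "(\<forall>ord. layer_order V r par fv ord \<longrightarrow>
            leaf_order V r par fv (layer_to_leaf V r par fv ord) \<and>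
            (\<forall>h::real. 0 \<le> h \<longrightarrow> leaf_to_layer V r par fv (layer_to_leaf V r par fv ord) h = ord h)) \<and>
         (\<forall>lo. leaf_order V r par fv lo \<longrightarrow>
            layer_order V r par fv (leaf_to_layer V r par fv lo) \<and>
            layer_to_leaf V r par fv (leaf_to_layer V r par fv lo) = lo)"
proof -
  have A: "leaf_order V r par fv (layer_to_leaf V r par fv ord) \<and>
            (\<forall>h::real. 0 \<le> h \<longrightarrow> leaf_to_layer V r par fv (layer_to_leaf V r par fv ord) h = ord h)"
    if "layer_order V r par fv ord" for ord
  proof -
    interpret LO V r par fv ord using assms that by unfold_locales
    show ?thesis using L_leaf_order T_L by blast
  qed
  have B: "layer_order V r par fv (leaf_to_layer V r par fv lo) \<and>
            layer_to_leaf V r par fv (leaf_to_layer V r par fv lo) = lo"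
    if "leaf_order V r par fv lo" for lo
  proof -
    interpret LF V r par fv lo using assms that by unfold_locales
    show ?thesis using T_layer L_T by blast
  qed
  show ?thesis using A B by blast
qed

end
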